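(* Consider a single-item auction setting with a feature space $\mathcal{Z}$, $n$ buyers each with unit demand and a single seller with supply $\lambda > 0$ and cost $c = 0$. Conditioned on each feature vector $z$, the buyers' bids $b_1,\dots,b_n$ are independent with $b_i \sim F_i^z$. For a pricing policy $p:\mathcal{Z}\to\mathbb{R}$ the clearing loss is $$\ell^c(p,z,\mathbf{b},c) = \sum_{i=1}^n \max\{b_i - p(z),0\} + \lambda \max\{p(z)-c,0\}.$$ Let $p$ be the pricing policy minimizing the expected clearing loss (i.e., for each $z$, $p(z)$ solves $\sum_{i=1}^n (1-F_i^z(p(z))) = \lambda$). Then the expected match rate under $p$ is at least $1-e^{-\lambda}$, where the match rate at price $p$ on a data point is ${\sf MR}(p) = \mathbf{1}[b^{(1)} \ge \max\{p,c\}]$ with $b^{(1)} = \max_i b_i$ the highest bid.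
   Context: $\mathbf{1}[\cdot]$ is the indicator function. The match rate is the indicator that the item is sold in a second-price auction with reserve price $\max\{p,c\}$. *)

theory Defs
  imports "HOL-Probability.Probability"
begin

definition match_rate :: "real \<Rightarrow> real \<Rightarrow> nat \<Rightarrow> (nat \<Rightarrow> real) \<Rightarrow> real" where
  "match_rate p c n b = (if max p c \<le> Max (b ` {..<n}) then 1 else 0)"

definition clearing_loss :: "real \<Rightarrow> real \<Rightarrow> nat \<Rightarrow> (nat \<Rightarrow> real) \<Rightarrow> real \<Rightarrow> real" where
  "clearing_loss lam pz n b c = (\<Sum>i<n. max (b i - pz) 0) + lam * max (pz - c) 0"

end

theory Submission
  imports Defs
begin

lemma mr_meas[measurable]:
  assumes [measurable]: "p \<in> borel_measurable Z"
  shows "(\<lambda>(z,b). match_rate (p z) 0 n b) \<in> borel_measurable (Z \<Otimes>\<^sub>M PiM {..<n} (\<lambda>_. borel))"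
proof -
  have e: "(\<lambda>(z,b). match_rate (p z) 0 n b) = (\<lambda>x. if max (p (fst x)) 0 \<le> Max ((\<lambda>i. snd x i) ` {..<n}) then 1 else 0)"
    by (auto simp: match_rate_def fun_eq_iff)
  show ?thesis unfolding e by measurable
qed

lemma mr_meas2[measurable]:
  shows "(\<lambda>b. match_rate q c n b) \<in> borel_measurable (PiM {..<n} (\<lambda>_. borel))"
proof -
  have e: "(\<lambda>b. match_rate q c n b) = (\<lambda>b. if max q c \<le> Max ((\<lambda>i. b i) ` {..<n}) then 1 else 0)"
    by (auto simp: match_rate_def fun_eq_iff)
  show ?thesis unfolding e by measurable
qed

lemma emeasure_PiE_fin:
  assumes "\<And>i. i \<in> I \<Longrightarrow> prob_space (M i)" "finite I"
    and "\<And>i. i \<in> I \<Longrightarrow> A i \<in> sets (M i)"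
  shows "emeasure (PiM I M) (Pi\<^sub>E I A) = (\<Prod>i\<in>I. emeasure (M i) (A i))"
proof -
  let ?M = "\<lambda>i. if i \<in> I then M i else count_space {undefined}"
  interpret M': prob_space "?M i" for i
    using assms by (cases "i \<in> I") (auto intro!: prob_spaceI)
  interpret product_prob_space ?M I
    by unfold_locales
  have "emeasure (PiM I ?M) (Pi\<^sub>E I A) = (\<Prod>i\<in>I. emeasure (?M i) (A i))"
    using assms by (intro emeasure_PiM) auto
  also have "(\<Pi>\<^sub>M i\<in>I. ?M i) = (\<Pi>\<^sub>M i\<in>I. M i)"
    by (intro PiM_cong) auto
  finally show ?thesis by simp
qed


lemma key:
  fixes F :: "nat \<Rightarrow> real measure"
  assumes n: "n \<ge> 1"
    and P: "\<And>i. i < n \<Longrightarrow> prob_space (F i)"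
    and S: "\<And>i. i < n \<Longrightarrow> sets (F i) = sets borel"
    and N: "\<And>i. i < n \<Longrightarrow> AE x in F i. 0 \<le> x"
    and L: "(\<Sum>i<n. 1 - cdf (F i) q) = lam"
  shows "1 - exp (- lam) \<le> (\<integral>b. match_rate q 0 n b \<partial>(PiM {..<n} F))"
proof -
  define M where "M = PiM {..<n} F"
  interpret M: prob_space M unfolding M_def by (rule prob_space_PiM) (use P in auto)
  have sM: "sets M = sets (PiM {..<n} (\<lambda>_. borel))"
    unfolding M_def by (rule sets_PiM_cong) (auto simp: S)
  have spM: "space M = space (PiM {..<n} (\<lambda>_. borel))"
    using sM by (rule sets_eq_imp_space_eq)
  define T where "T = {x::real. x \<le> q \<or> x < 0}"
  have T: "T \<in> sets borel" unfolding T_def by measurable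
  define E where "E = Pi\<^sub>E {..<n} (\<lambda>_. T)"
  have EM: "E \<in> sets M" unfolding E_def M_def
    by (rule sets_PiM_I_finite) (auto simp: S T)
  have "emeasure M E = (\<Prod>i<n. emeasure (F i) T)"
    unfolding M_def E_def by (rule emeasure_PiE_fin) (auto simp: P S T)
  also have "\<dots> = (\<Prod>i<n. ennreal (measure (F i) T))"
    by (intro prod.cong refl) (simp add: finite_measure.emeasure_eq_measure[OF prob_space.finite_measure[OF P]])
  also have "\<dots> = ennreal (\<Prod>i<n. measure (F i) T)"
    by (simp add: prod_ennreal)
  finally have mE: "measure M E = (\<Prod>i<n. measure (F i) T)"
    by (simp add: M.emeasure_eq_measure prod_nonneg)
  have Ti: "measure (F i) T \<le> 1 - (1 - cdf (F i) q)" if i: "i < n" for i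
  proof -
    interpret Fi: prob_space "F i" using P[OF i] .
    have sp: "space (F i) = UNIV" using S[OF i] by (metis sets_eq_imp_space_eq space_borel)
    have A1: "{..q} \<in> sets (F i)" "{x. \<not> 0 \<le> x} \<in> sets (F i)" "T \<in> sets (F i)" using S[OF i] T by auto
    have "emeasure (F i) {x \<in> space (F i). \<not> 0 \<le> x} = 0"
      using N[OF i] A1 sp by (subst (asm) AE_iff_measurable[OF _ refl]) auto
    then have z: "measure (F i) {x. \<not> 0 \<le> x} = 0" using sp by (simp add: measure_def)
    have "T \<subseteq> {..q} \<union> {x. \<not> 0 \<le> x}" unfolding T_def by auto
    then have "measure (F i) T \<le> measure (F i) ({..q} \<union> {x. \<not> 0 \<le> x})"
      using A1 by (intro Fi.finite_measure_mono) auto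
    also have "\<dots> \<le> measure (F i) {..q} + measure (F i) {x. \<not> 0 \<le> x}"
      using A1 by (intro measure_subadditive) (auto simp: Fi.emeasure_eq_measure)
    finally show ?thesis using z by (simp add: cdf_def)
  qed
  have "measure M E \<le> (\<Prod>i<n. exp (- (1 - cdf (F i) q)))"
    unfolding mE
  proof (intro prod_mono conjI)
    fix i assume "i \<in> {..<n}"
    then have i: "i < n" by simp
    show "0 \<le> measure (F i) T" by simp
    have "1 + (- (1 - cdf (F i) q)) \<le> exp (- (1 - cdf (F i) q))" by (rule exp_ge_add_one_self)
    then show "measure (F i) T \<le> exp (- (1 - cdf (F i) q))" using Ti[OF i] by simp
  qed
  also have "\<dots> = exp (- lam)"
    proof -
    have "(\<Sum>i<n. - (1 - cdf (F i) q)) = - lam" unfolding sum_negf L ..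
    then show ?thesis by (simp add: exp_sum[symmetric] del: minus_diff_eq)
  qed
  finally have mEl: "measure M E \<le> exp (- lam)" .
  have mrM: "(\<lambda>b. match_rate q 0 n b) \<in> borel_measurable M"
    using mr_meas2 by (simp add: measurable_cong_sets[OF sM refl])
  have int1: "integrable M (\<lambda>b. match_rate q 0 n b)"
    using mrM by (intro M.integrable_const_bound[where B=1]) (auto simp: match_rate_def)
  have int2: "integrable M (\<lambda>b. 1 - indicator E b :: real)"
    using EM by (intro Bochner_Integration.integrable_diff) (auto simp: M.emeasure_eq_measure)
  have pt: "1 - indicator E b \<le> match_rate q 0 n b" if b: "b \<in> space M" for b
  proof (cases "b \<in> E")
    case True then show ?thesis by (simp add: match_rate_def)
  next
    case False
    have bP: "b \<in> Pi\<^sub>E {..<n} (\<lambda>_. UNIV)" using b spM by (simp add: space_PiM)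
    then obtain i where i: "i < n" "b i \<notin> T" using False unfolding E_def by (auto simp: PiE_iff)
    have "b i \<le> Max (b ` {..<n})" using i by (intro Max_ge) auto
    moreover have "q < b i" "0 \<le> b i" using i(2) unfolding T_def by auto
    ultimately have "max q 0 \<le> Max (b ` {..<n})" by linarith
    then show ?thesis by (simp add: match_rate_def)
  qed
  have "1 - exp (- lam) \<le> 1 - measure M E" using mEl by simp
  also have "\<dots> = (\<integral>b. 1 - indicator E b \<partial>M)"
    using EM by (subst Bochner_Integration.integral_diff) (auto simp: M.emeasure_eq_measure M.prob_space)
  also have "\<dots> \<le> (\<integral>b. match_rate q 0 n b \<partial>M)"
    using int1 int2 pt by (intro integral_mono) auto
  finally show ?thesis unfolding M_def .
qed


theorem mainTheorem2:
  fixes Z :: "'z measure"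
    and F :: "'z \<Rightarrow> nat \<Rightarrow> real measure"
    and p :: "'z \<Rightarrow> real"
    and n :: nat
    and lam :: real
  assumes "prob_space Z"
    and "n \<ge> 1"
    and "lam > 0"
    and "\<And>z i. z \<in> space Z \<Longrightarrow> i < n \<Longrightarrow> prob_space (F z i)"
    and "\<And>z i. z \<in> space Z \<Longrightarrow> i < n \<Longrightarrow> sets (F z i) = sets borel"
    and "\<And>z i. z \<in> space Z \<Longrightarrow> i < n \<Longrightarrow> AE x in F z i. 0 \<le> x"
    and "(\<lambda>z. PiM {..<n} (F z)) \<in> Z \<rightarrow>\<^sub>M subprob_algebra (PiM {..<n} (\<lambda>_. borel))"
    and "p \<in> borel_measurable Z"
    and "\<And>z. z \<in> space Z \<Longrightarrow> (\<Sum>i<n. 1 - cdf (F z i) (p z)) = lam"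
  shows "1 - exp (- lam) \<le>
           (\<integral>z. (\<integral>b. match_rate (p z) 0 n b \<partial>(PiM {..<n} (F z))) \<partial>Z)"
proof -
  interpret Z: prob_space Z by fact
  note K[measurable] = assms(7)
  note pm[measurable] = assms(8)
  define g where "g z = (\<integral>b. match_rate (p z) 0 n b \<partial>(PiM {..<n} (F z)))" for z
  have sK: "sets (PiM {..<n} (F z)) = sets (PiM {..<n} (\<lambda>_. borel))" if "z \<in> space Z" for z
    by (rule sets_PiM_cong) (auto simp: assms(5) that)
  have g_eq: "g z = enn2real (\<integral>\<^sup>+ b. ennreal (match_rate (p z) 0 n b) \<partial>(PiM {..<n} (F z)))"
    if z: "z \<in> space Z" for z
    unfolding g_def
    by (rule integral_eq_nn_integral)
       (auto simp: measurable_cong_sets[OF sK[OF z] refl] match_rate_def)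
  have f2: "(\<lambda>(z, b). ennreal (match_rate (p z) 0 n b)) \<in> borel_measurable (Z \<Otimes>\<^sub>M PiM {..<n} (\<lambda>_. borel))"
    using mr_meas[OF pm, of n] by (simp add: case_prod_beta')
  have "(\<lambda>z. \<integral>\<^sup>+ b. ennreal (match_rate (p z) 0 n b) \<partial>(PiM {..<n} (F z))) \<in> borel_measurable Z"
    by (rule nn_integral_measurable_subprob_algebra2[OF _ K]) (use f2 in simp)
  then have "(\<lambda>z. enn2real (\<integral>\<^sup>+ b. ennreal (match_rate (p z) 0 n b) \<partial>(PiM {..<n} (F z)))) \<in> borel_measurable Z"
    by measurable
  then have gm: "g \<in> borel_measurable Z"
    by (rule measurable_cong[THEN iffD1, rotated]) (simp add: g_eq)
  have gb: "1 - exp (- lam) \<le> g z" if z: "z \<in> space Z" for z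
    unfolding g_def
    by (rule key) (use assms(2,4,5,6,9) z in auto)
  have gle: "g z \<le> 1" if z: "z \<in> space Z" for z
  proof -
    interpret P: prob_space "PiM {..<n} (F z)" by (rule prob_space_PiM) (use assms(4) z in auto)
    have "g z \<le> (\<integral>b. 1 \<partial>(PiM {..<n} (F z)))" unfolding g_def
    proof (rule integral_mono)
      show "integrable (PiM {..<n} (F z)) (\<lambda>b. match_rate (p z) 0 n b)"
        by (rule P.integrable_const_bound[where B=1])
           (auto simp: measurable_cong_sets[OF sK[OF z] refl] match_rate_def)
    qed (auto simp: match_rate_def)
    then show ?thesis by (simp add: P.prob_space)
  qed
  have gi: "integrable Z g"
  proof (rule Z.integrable_const_bound[where B=1])
    have "0 \<le> 1 - exp (- lam)" using assms(3) by simp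
    then have "\<And>z. z \<in> space Z \<Longrightarrow> norm (g z) \<le> 1"
      using gb gle by (smt (verit) real_norm_def)
    then show "AE z in Z. norm (g z) \<le> 1" by (rule AE_I2)
  qed (rule gm)
  have "1 - exp (- lam) = (\<integral>z. 1 - exp (- lam) \<partial>Z)" by (simp add: Z.prob_space)
  also have "\<dots> \<le> (\<integral>z. g z \<partial>Z)"
    using gi gb by (intro integral_mono) auto
  finally show ?thesis unfolding g_def .
qed

end
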